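(* Let $c,d,u\in P$ with $c<d<u$. Then $(P;{\rm Low})$ has a primitive positive interpretation in $(P;{\rm Sep},c,d,u)$.
   Context: $(P;\leq)$ is the random partial order (Fraïssé limit of all finite partial orders); $x<y$ means $x\leq y\wedge x\ne y$; $x\bot y$ incomparability; $z\bot xy$ abbreviates $z\bot x\wedge z\bot y$. ${\rm Low}(x,y,z):=(x<y\wedge z\bot xy)\vee(x<z\wedge y\bot xz)$. ${\rm Cycl}(x,y,z):=(x<y\wedge y<z)\vee(y<z\wedge z<x)\vee(z<x\wedge x<y)\vee(x<y\wedge z\bot xy)\vee(y<z\wedge x\bot yz)\vee(z<x\wedge y\bot zx)$; ${\rm Sep}(x,y,z,t):=({\rm Cycl}(x,y,z)\wedge{\rm Cycl}(y,z,t)\wedge{\rm Cycl}(x,y,t)\wedge{\rm Cycl}(x,z,t))\vee({\rm Cycl}(z,y,x)\wedge{\rm Cycl}(t,z,y)\wedge{\rm Cycl}(t,y,x)\wedge{\rm Cycl}(t,z,x))$. Primitive positive interpretation of $\Delta$ (domain $D$) in $\Gamma$: $n\geq1$ and a surjective partial map $I:P^n\to D$ whose domain, preimage of equality and preimages of relations of $\Delta$ are definable in $\Gamma$ by formulas $\exists\bar y$ (conjunction of atomic formulas). *)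

theory Defs
  imports "HOL-Library.Countable_Set"
begin

definition po_less :: "('a \<Rightarrow> 'a \<Rightarrow> bool) \<Rightarrow> 'a \<Rightarrow> 'a \<Rightarrow> bool" where
  "po_less le x y \<longleftrightarrow> le x y \<and> x \<noteq> y"

definition po_inc :: "('a \<Rightarrow> 'a \<Rightarrow> bool) \<Rightarrow> 'a \<Rightarrow> 'a \<Rightarrow> bool" where
  "po_inc le x y \<longleftrightarrow> \<not> le x y \<and> \<not> le y x"

definition partial_order_on :: "'a set \<Rightarrow> ('a \<Rightarrow> 'a \<Rightarrow> bool) \<Rightarrow> bool" where
  "partial_order_on A le \<longleftrightarrow>
     (\<forall>x\<in>A. le x x) \<and>
     (\<forall>x\<in>A. \<forall>y\<in>A. le x y \<and> le y x \<longrightarrow> x = y) \<and>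
     (\<forall>x\<in>A. \<forall>y\<in>A. \<forall>z\<in>A. le x y \<and> le y z \<longrightarrow> le x z)"

text \<open>(UNIV, le) is the random partial order: the Fraisse limit of the class of all
  finite partial orders, i.e. a countable partial order into which every finite partial
  order embeds and which is homogeneous (every isomorphism between finite substructures
  extends to an automorphism).\<close>
definition random_po :: "('a \<Rightarrow> 'a \<Rightarrow> bool) \<Rightarrow> bool" where
  "random_po le \<longleftrightarrow>
     countable (UNIV :: 'a set) \<and>
     partial_order_on UNIV le \<and>
     (\<forall>(n::nat) (r::nat \<Rightarrow> nat \<Rightarrow> bool). partial_order_on {..<n} r \<longrightarrow>
        (\<exists>f. inj_on f {..<n} \<and> (\<forall>i<n. \<forall>j<n. r i j \<longleftrightarrow> le (f i) (f j)))) \<and>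
     (\<forall>A g. finite A \<and> inj_on g A \<and> (\<forall>x\<in>A. \<forall>y\<in>A. le x y \<longleftrightarrow> le (g x) (g y)) \<longrightarrow>
        (\<exists>h. bij h \<and> (\<forall>x y. le x y \<longleftrightarrow> le (h x) (h y)) \<and> (\<forall>x\<in>A. h x = g x)))"

definition Low :: "('a \<Rightarrow> 'a \<Rightarrow> bool) \<Rightarrow> 'a \<Rightarrow> 'a \<Rightarrow> 'a \<Rightarrow> bool" where
  "Low le x y z \<longleftrightarrow>
     (po_less le x y \<and> po_inc le z x \<and> po_inc le z y) \<or>
     (po_less le x z \<and> po_inc le y x \<and> po_inc le y z)"

definition Cycl :: "('a \<Rightarrow> 'a \<Rightarrow> bool) \<Rightarrow> 'a \<Rightarrow> 'a \<Rightarrow> 'a \<Rightarrow> bool" where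
  "Cycl le x y z \<longleftrightarrow>
     (po_less le x y \<and> po_less le y z) \<or>
     (po_less le y z \<and> po_less le z x) \<or>
     (po_less le z x \<and> po_less le x y) \<or>
     (po_less le x y \<and> po_inc le z x \<and> po_inc le z y) \<or>
     (po_less le y z \<and> po_inc le x y \<and> po_inc le x z) \<or>
     (po_less le z x \<and> po_inc le y z \<and> po_inc le y x)"

definition Sep :: "('a \<Rightarrow> 'a \<Rightarrow> bool) \<Rightarrow> 'a \<Rightarrow> 'a \<Rightarrow> 'a \<Rightarrow> 'a \<Rightarrow> bool" where
  "Sep le x y z t \<longleftrightarrow>
     (Cycl le x y z \<and> Cycl le y z t \<and> Cycl le x y t \<and> Cycl le x z t) \<or>
     (Cycl le z y x \<and> Cycl le t z y \<and> Cycl le t y x \<and> Cycl le t z x)"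

text \<open>A relational structure on the type 'a is given by a list of relations, each a
  predicate on tuples (lists). Constants are represented, as usual, by singleton unary
  relations.\<close>

datatype atom = Eq nat nat | Rel nat "nat list"

fun atom_vars :: "atom \<Rightarrow> nat set" where
  "atom_vars (Eq i j) = {i, j}"
| "atom_vars (Rel r args) = set args"

fun holds :: "('a list \<Rightarrow> bool) list \<Rightarrow> (nat \<Rightarrow> 'a) \<Rightarrow> atom \<Rightarrow> bool" where
  "holds rels v (Eq i j) \<longleftrightarrow> v i = v j"
| "holds rels v (Rel r args) \<longleftrightarrow> r < length rels \<and> (rels ! r) (map v args)"

text \<open>R (a relation on k-tuples) is pp-definable in the structure: there are m existentially
  quantified variables (indices k..k+m-1; free variables are 0..k-1) and a finite
  conjunction of atoms defining R.\<close>
definition pp_definable :: "('a list \<Rightarrow> bool) list \<Rightarrow> nat \<Rightarrow> ('a list \<Rightarrow> bool) \<Rightarrow> bool" where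
  "pp_definable rels k R \<longleftrightarrow>
     (\<exists>(m::nat) (atoms::atom list).
        (\<forall>a\<in>set atoms. \<forall>i\<in>atom_vars a. i < k + m) \<and>
        (\<forall>xs. length xs = k \<longrightarrow>
           (R xs \<longleftrightarrow> (\<exists>ys. length ys = m \<and> (\<forall>a\<in>set atoms. holds rels (\<lambda>i. (xs @ ys) ! i) a)))))"

definition chunk :: "nat \<Rightarrow> nat \<Rightarrow> 'a list \<Rightarrow> 'a list" where
  "chunk n i zs = take n (drop (i * n) zs)"

text \<open>Primitive positive interpretation of Delta (domain: the type 'b; relations given with
  their arities) in Gamma (domain: the type 'a): n \<ge> 1 and a surjective partial map
  I : 'a^n \<rightharpoonup> 'b whose domain, preimage of equality, and preimages of the relations of
  Delta are pp-definable in Gamma.\<close>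
definition pp_interprets :: "(nat \<times> ('b list \<Rightarrow> bool)) list \<Rightarrow> ('a list \<Rightarrow> bool) list \<Rightarrow> bool" where
  "pp_interprets delta gamma \<longleftrightarrow>
     (\<exists>(n::nat) (I :: 'a list \<Rightarrow> 'b option). n \<ge> 1 \<and>
        (\<forall>b. \<exists>xs. length xs = n \<and> I xs = Some b) \<and>
        pp_definable gamma n (\<lambda>xs. I xs \<noteq> None) \<and>
        pp_definable gamma (2 * n)
          (\<lambda>zs. \<exists>b. I (chunk n 0 zs) = Some b \<and> I (chunk n 1 zs) = Some b) \<and>
        (\<forall>(k, R)\<in>set delta.
           pp_definable gamma (k * n)
             (\<lambda>zs. \<exists>bs. length bs = k \<and> (\<forall>i<k. I (chunk n i zs) = Some (bs ! i)) \<and> R bs)))"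

end

theory Submission
  imports Defs
begin


definition ext_prop :: "'a set \<Rightarrow> ('a \<Rightarrow> 'a \<Rightarrow> bool) \<Rightarrow> bool" where
  "ext_prop S le \<longleftrightarrow> (\<forall>A L U. finite A \<and> A \<subseteq> S \<and> L \<subseteq> A \<and> U \<subseteq> A \<and>
     (\<forall>a\<in>A. \<forall>b\<in>L. le a b \<longrightarrow> a \<in> L) \<and> (\<forall>a\<in>U. \<forall>b\<in>A. le a b \<longrightarrow> b \<in> U) \<and>
     (\<forall>a\<in>L. \<forall>b\<in>U. le a b) \<and> L \<inter> U = {} \<longrightarrow>
     (\<exists>p\<in>S. p \<notin> A \<and> (\<forall>a\<in>A. (le a p \<longleftrightarrow> a \<in> L) \<and> (le p a \<longleftrightarrow> a \<in> U))))"

lemma ext_propD: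
  assumes "ext_prop S le" "finite A" "A \<subseteq> S" "L \<subseteq> A" "U \<subseteq> A"
    "\<And>a b. a \<in> A \<Longrightarrow> b \<in> L \<Longrightarrow> le a b \<Longrightarrow> a \<in> L"
    "\<And>a b. a \<in> U \<Longrightarrow> b \<in> A \<Longrightarrow> le a b \<Longrightarrow> b \<in> U"
    "\<And>a b. a \<in> L \<Longrightarrow> b \<in> U \<Longrightarrow> le a b" "L \<inter> U = {}"
  shows "\<exists>p\<in>S. p \<notin> A \<and> (\<forall>a\<in>A. (le a p \<longleftrightarrow> a \<in> L) \<and> (le p a \<longleftrightarrow> a \<in> U))"
proof -
  have "\<forall>A L U. finite A \<and> A \<subseteq> S \<and> L \<subseteq> A \<and> U \<subseteq> A \<and>
     (\<forall>a\<in>A. \<forall>b\<in>L. le a b \<longrightarrow> a \<in> L) \<and> (\<forall>a\<in>U. \<forall>b\<in>A. le a b \<longrightarrow> b \<in> U) \<and>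
     (\<forall>a\<in>L. \<forall>b\<in>U. le a b) \<and> L \<inter> U = {} \<longrightarrow>
     (\<exists>p\<in>S. p \<notin> A \<and> (\<forall>a\<in>A. (le a p \<longleftrightarrow> a \<in> L) \<and> (le p a \<longleftrightarrow> a \<in> U)))"
    using assms(1) unfolding ext_prop_def .
  then have "finite A \<and> A \<subseteq> S \<and> L \<subseteq> A \<and> U \<subseteq> A \<and>
     (\<forall>a\<in>A. \<forall>b\<in>L. le a b \<longrightarrow> a \<in> L) \<and> (\<forall>a\<in>U. \<forall>b\<in>A. le a b \<longrightarrow> b \<in> U) \<and>
     (\<forall>a\<in>L. \<forall>b\<in>U. le a b) \<and> L \<inter> U = {} \<longrightarrow>
     (\<exists>p\<in>S. p \<notin> A \<and> (\<forall>a\<in>A. (le a p \<longleftrightarrow> a \<in> L) \<and> (le p a \<longleftrightarrow> a \<in> U)))"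
    by (elim allE)
  moreover have "finite A \<and> A \<subseteq> S \<and> L \<subseteq> A \<and> U \<subseteq> A \<and>
     (\<forall>a\<in>A. \<forall>b\<in>L. le a b \<longrightarrow> a \<in> L) \<and> (\<forall>a\<in>U. \<forall>b\<in>A. le a b \<longrightarrow> b \<in> U) \<and>
     (\<forall>a\<in>L. \<forall>b\<in>U. le a b) \<and> L \<inter> U = {}"
    using assms(2-) by blast
  ultimately show ?thesis by blast
qed

lemma random_po_po:
  assumes "random_po le"
  shows "\<And>x. le x x" "\<And>x y. le x y \<Longrightarrow> le y x \<Longrightarrow> x = y"
    "\<And>x y z. le x y \<Longrightarrow> le y z \<Longrightarrow> le x z"
proof -
  have po: "partial_order_on UNIV le" using assms unfolding random_po_def by (elim conjE)
  show "\<And>x. le x x" using po unfolding partial_order_on_def by (meson UNIV_I)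
  show "\<And>x y. le x y \<Longrightarrow> le y x \<Longrightarrow> x = y" using po unfolding partial_order_on_def by (meson UNIV_I)
  show "\<And>x y z. le x y \<Longrightarrow> le y z \<Longrightarrow> le x z" using po unfolding partial_order_on_def by (meson UNIV_I)
qed

lemma random_ep:
  assumes rp: "random_po le"
  shows "ext_prop UNIV le"
  unfolding ext_prop_def
proof (intro allI impI, elim conjE)
  fix A L U :: "'a set"
  assume fA: "finite A" and LA: "L \<subseteq> A" and UA: "U \<subseteq> A"
    and Ld: "\<forall>a\<in>A. \<forall>b\<in>L. le a b \<longrightarrow> a \<in> L" and Uu: "\<forall>a\<in>U. \<forall>b\<in>A. le a b \<longrightarrow> b \<in> U"
    and LU: "\<forall>a\<in>L. \<forall>b\<in>U. le a b" and LUd: "L \<inter> U = {}"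
  note po = random_po_po[OF rp]
  define n where "n = card A"
  obtain g where g: "bij_betw g {0..<n} A" using ex_bij_betw_nat_finite[OF fA] n_def by blast
  have gi: "\<And>i. i < n \<Longrightarrow> g i \<in> A" using g by (auto simp: bij_betw_def)
  have ginj: "\<And>i j. i < n \<Longrightarrow> j < n \<Longrightarrow> g i = g j \<Longrightarrow> i = j"
    using g by (auto simp: bij_betw_def inj_on_def)
  have gsurj: "\<And>a. a \<in> A \<Longrightarrow> \<exists>i<n. g i = a" using g by (force simp: bij_betw_def)
  define r where "r i j \<longleftrightarrow> i = j \<or> (i < n \<and> j < n \<and> le (g i) (g j)) \<or>
      (i < n \<and> j = n \<and> g i \<in> L) \<or> (i = n \<and> j < n \<and> g j \<in> U)" for i j
  have por: "partial_order_on {..<Suc n} r"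
    unfolding partial_order_on_def
  proof (intro conjI ballI impI)
    fix x assume "x \<in> {..<Suc n}" then show "r x x" by (simp add: r_def)
  next
    fix x y assume xy: "x \<in> {..<Suc n}" "y \<in> {..<Suc n}" and h: "r x y \<and> r y x"
    show "x = y"
    proof (rule ccontr)
      assume ne: "x \<noteq> y"
      consider "x < n" "y < n" | "x = n" "y < n" | "x < n" "y = n" using xy ne by fastforce
      then show False
      proof cases
        case 1 then have "le (g x) (g y)" "le (g y) (g x)" using h ne by (auto simp: r_def)
        then have "g x = g y" by (rule po(2))
        then show ?thesis using ginj 1 ne by blast
      next
        case 2 then show ?thesis using h ne LUd gi by (auto simp: r_def)
      next
        case 3 then show ?thesis using h ne LUd gi by (auto simp: r_def)
      qed
    qed
  next
    fix x y z assume xyz: "x \<in> {..<Suc n}" "y \<in> {..<Suc n}" "z \<in> {..<Suc n}"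
      and h: "r x y \<and> r y z"
    show "r x z"
    proof (cases "x = y \<or> y = z")
      case True then show ?thesis using h by auto
    next
      case False
      then have ne: "x \<noteq> y" "y \<noteq> z" by auto
      have xn: "x \<le> n" "y \<le> n" "z \<le> n" using xyz by auto
      show ?thesis
      proof (cases "x = z")
        case True then show ?thesis by (simp add: r_def)
      next
        case False
        then consider "x < n" "y < n" "z < n" | "x = n" "y < n" "z < n" | "x < n" "y = n" "z < n"
          | "x < n" "y < n" "z = n" using xn ne by fastforce
        then show ?thesis
        proof cases
          case 1 then have "le (g x) (g y)" "le (g y) (g z)" using h ne by (auto simp: r_def)
          then have "le (g x) (g z)" by (rule po(3))
          then show ?thesis using 1 by (simp add: r_def)
        next
          case 2 then show ?thesis using h ne Uu gi by (auto simp: r_def)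
        next
          case 3 then show ?thesis using h ne LU gi by (auto simp: r_def)
        next
          case 4 then show ?thesis using h ne Ld gi by (auto simp: r_def)
        qed
      qed
    qed
  qed
  from rp have univ: "\<And>n r. partial_order_on {..<n::nat} r \<Longrightarrow>
        (\<exists>f. inj_on f {..<n} \<and> (\<forall>i<n. \<forall>j<n. r i j \<longleftrightarrow> le (f i) (f j)))"
    unfolding random_po_def by blast
  from rp have hom: "\<And>A g. finite A \<Longrightarrow> inj_on g A \<Longrightarrow> (\<forall>x\<in>A. \<forall>y\<in>A. le x y \<longleftrightarrow> le (g x) (g y)) \<Longrightarrow>
        (\<exists>h. bij h \<and> (\<forall>x y. le x y \<longleftrightarrow> le (h x) (h y)) \<and> (\<forall>x\<in>A. h x = g x))"
    unfolding random_po_def by blast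
  obtain f where finj: "inj_on f {..<Suc n}" and fr: "\<And>i j. i < Suc n \<Longrightarrow> j < Suc n \<Longrightarrow> r i j \<longleftrightarrow> le (f i) (f j)"
    using univ[OF por] by blast
  define B where "B = f ` {..<n}"
  define g' where "g' x = g (inv_into {..<n} f x)" for x
  have finj': "inj_on f {..<n}" using finj by (rule inj_on_subset) auto
  have g'f: "\<And>i. i < n \<Longrightarrow> g' (f i) = g i" unfolding g'_def using finj' by simp
  have ginjB: "inj_on g' B"
    unfolding inj_on_def B_def using g'f ginj by force
  have gordB: "\<forall>x\<in>B. \<forall>y\<in>B. le x y \<longleftrightarrow> le (g' x) (g' y)"
  proof (intro ballI)
    fix x y assume "x \<in> B" "y \<in> B"
    then obtain i j where ij: "i < n" "j < n" "x = f i" "y = f j" unfolding B_def by auto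
    have "le x y \<longleftrightarrow> r i j" using fr[of i j] ij by simp
    also have "\<dots> \<longleftrightarrow> le (g i) (g j)" unfolding r_def using ij po(1) by auto
    finally show "le x y \<longleftrightarrow> le (g' x) (g' y)" using ij g'f by simp
  qed
  have finB: "finite B" unfolding B_def by simp
  obtain h where hb: "bij h" and hle: "\<And>x y. le x y \<longleftrightarrow> le (h x) (h y)"
      and hg: "\<And>x. x \<in> B \<Longrightarrow> h x = g' x"
    using hom[OF finB ginjB gordB] by blast
  have hfi: "\<And>i. i < n \<Longrightarrow> h (f i) = g i" using hg g'f unfolding B_def by auto
  define p where "p = h (f n)"
  have hinj: "inj h" using hb bij_is_inj by blast
  show "\<exists>p\<in>UNIV. p \<notin> A \<and> (\<forall>a\<in>A. (le a p \<longleftrightarrow> a \<in> L) \<and> (le p a \<longleftrightarrow> a \<in> U))"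
  proof (intro bexI conjI ballI)
    show "p \<notin> A"
    proof
      assume "p \<in> A"
      then obtain i where i: "i < n" "g i = p" using gsurj by blast
      then have "h (f i) = h (f n)" using hfi p_def by simp
      then have "f i = f n" using hinj by (simp add: inj_eq)
      then have "i = n" using finj i(1) by (auto simp: inj_on_def)
      then show False using i by simp
    qed
  next
    fix a assume "a \<in> A"
    then obtain i where i: "i < n" "g i = a" using gsurj by blast
    have "le a p \<longleftrightarrow> le (f i) (f n)" unfolding p_def using hle hfi i by metis
    also have "\<dots> \<longleftrightarrow> r i n" using fr[of i n] i by simp
    also have "\<dots> \<longleftrightarrow> a \<in> L" unfolding r_def using i by auto
    finally show "le a p \<longleftrightarrow> a \<in> L" .
    have "le p a \<longleftrightarrow> le (f n) (f i)" unfolding p_def using hle hfi i by metis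
    also have "\<dots> \<longleftrightarrow> r n i" using fr[of n i] i by simp
    also have "\<dots> \<longleftrightarrow> a \<in> U" unfolding r_def using i by auto
    finally show "le p a \<longleftrightarrow> a \<in> U" .
  qed simp
qed



definition piso :: "('a \<Rightarrow> 'a \<Rightarrow> bool) \<Rightarrow> ('b \<Rightarrow> 'b \<Rightarrow> bool) \<Rightarrow> 'a set \<Rightarrow> 'b set \<Rightarrow> ('a \<times> 'b) set \<Rightarrow> bool" where
  "piso le1 le2 S T F \<longleftrightarrow> finite F \<and> F \<subseteq> S \<times> T \<and>
     (\<forall>a b a' b'. (a, b) \<in> F \<longrightarrow> (a', b') \<in> F \<longrightarrow> (le1 a a' \<longleftrightarrow> le2 b b') \<and> (a = a' \<longleftrightarrow> b = b'))"

lemma piso_conv: "piso le1 le2 S T F \<Longrightarrow> piso le2 le1 T S (converse F)"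
  unfolding piso_def by auto

lemma piso_empty: "piso le1 le2 S T {}"
  unfolding piso_def by auto

lemma forth:
  assumes p: "piso le1 le2 S T F" and ep: "ext_prop T le2"
    and r1: "\<forall>x\<in>S. le1 x x" and r2: "\<forall>x\<in>T. le2 x x"
    and a1: "\<forall>x\<in>S. \<forall>y\<in>S. le1 x y \<longrightarrow> le1 y x \<longrightarrow> x = y"
    and t1: "\<forall>x\<in>S. \<forall>y\<in>S. \<forall>z\<in>S. le1 x y \<longrightarrow> le1 y z \<longrightarrow> le1 x z"
    and aS: "a \<in> S"
  shows "\<exists>b. piso le1 le2 S T (insert (a, b) F)"
proof (cases "a \<in> Domain F")
  case True
  then obtain b where "(a, b) \<in> F" by auto
  then have "insert (a, b) F = F" by auto
  then show ?thesis using p by metis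
next
  case False
  have fin: "finite F" and sub: "F \<subseteq> S \<times> T" using p unfolding piso_def by auto
  have iso: "\<And>a b a' b'. (a, b) \<in> F \<Longrightarrow> (a', b') \<in> F \<Longrightarrow> (le1 a a' \<longleftrightarrow> le2 b b') \<and> (a = a' \<longleftrightarrow> b = b')"
    using p unfolding piso_def by blast
  define A where "A = Range F"
  define L where "L = {b'. \<exists>a'. (a', b') \<in> F \<and> le1 a' a}"
  define U where "U = {b'. \<exists>a'. (a', b') \<in> F \<and> le1 a a'}"
  have "\<exists>p\<in>T. p \<notin> A \<and> (\<forall>x\<in>A. (le2 x p \<longleftrightarrow> x \<in> L) \<and> (le2 p x \<longleftrightarrow> x \<in> U))"
  proof (rule ext_propD[OF ep])
    show "finite A" unfolding A_def using fin by (simp add: finite_Range)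
    show "A \<subseteq> T" unfolding A_def using sub by auto
    show "L \<subseteq> A" unfolding L_def A_def by auto
    show "U \<subseteq> A" unfolding U_def A_def by auto
    show "x \<in> L" if "x \<in> A" "y \<in> L" "le2 x y" for x y
    proof -
      from that obtain ax ay where "(ax, x) \<in> F" "(ay, y) \<in> F" "le1 ay a"
        unfolding A_def L_def by auto
      moreover have "le1 ax ay" using iso[OF \<open>(ax, x) \<in> F\<close> \<open>(ay, y) \<in> F\<close>] that(3) by blast
      moreover have "ax \<in> S" "ay \<in> S" using sub calculation(1,2) by auto
      ultimately show ?thesis unfolding L_def using t1 aS by blast
    qed
    show "y \<in> U" if "x \<in> U" "y \<in> A" "le2 x y" for x y
    proof -
      from that obtain ax ay where "(ax, x) \<in> F" "(ay, y) \<in> F" "le1 a ax"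
        unfolding A_def U_def by auto
      moreover have "le1 ax ay" using iso[OF \<open>(ax, x) \<in> F\<close> \<open>(ay, y) \<in> F\<close>] that(3) by blast
      moreover have "ax \<in> S" "ay \<in> S" using sub calculation(1,2) by auto
      ultimately show ?thesis unfolding U_def using t1 aS by blast
    qed
    show "le2 x y" if "x \<in> L" "y \<in> U" for x y
    proof -
      from that obtain ax ay where "(ax, x) \<in> F" "(ay, y) \<in> F" "le1 ax a" "le1 a ay"
        unfolding U_def L_def by auto
      moreover have "ax \<in> S" "ay \<in> S" using sub calculation(1,2) by auto
      ultimately have "le1 ax ay" using t1 aS by blast
      then show ?thesis using iso[OF \<open>(ax, x) \<in> F\<close> \<open>(ay, y) \<in> F\<close>] by blast
    qed
    show "L \<inter> U = {}"
    proof (rule ccontr)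
      assume "L \<inter> U \<noteq> {}"
      then obtain x ax ay where "(ax, x) \<in> F" "(ay, x) \<in> F" "le1 ax a" "le1 a ay"
        unfolding U_def L_def by auto
      moreover have "ax = ay" using iso[OF \<open>(ax, x) \<in> F\<close> \<open>(ay, x) \<in> F\<close>] by blast
      moreover have "ax \<in> S" using sub calculation(1) by auto
      ultimately have "a = ax" using a1 aS by blast
      then show False using False \<open>(ax, x) \<in> F\<close> by auto
    qed
  qed
  then obtain b where bT: "b \<in> T" and bA: "b \<notin> A"
    and bp: "\<And>x. x \<in> A \<Longrightarrow> (le2 x b \<longleftrightarrow> x \<in> L) \<and> (le2 b x \<longleftrightarrow> x \<in> U)" by blast
  have fin2: "finite (insert (a, b) F)" using fin by simp
  have sub2: "insert (a, b) F \<subseteq> S \<times> T" using sub aS bT by auto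
  have "\<forall>x y x' y'. (x, y) \<in> insert (a, b) F \<longrightarrow> (x', y') \<in> insert (a, b) F \<longrightarrow> (le1 x x' \<longleftrightarrow> le2 y y') \<and> (x = x' \<longleftrightarrow> y = y')"
  proof (intro allI impI)
    fix x y x' y' assume h: "(x, y) \<in> insert (a, b) F" "(x', y') \<in> insert (a, b) F"
    have aF: "\<And>y. (a, y) \<notin> F" using False by auto
    have bF: "\<And>x. (x, b) \<notin> F" using bA unfolding A_def by auto
    have Lc: "\<And>x' y'. (x', y') \<in> F \<Longrightarrow> (y' \<in> L \<longleftrightarrow> le1 x' a)"
      unfolding L_def using iso by blast
    have Uc: "\<And>x' y'. (x', y') \<in> F \<Longrightarrow> (y' \<in> U \<longleftrightarrow> le1 a x')"
      unfolding U_def using iso by blast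
    have inA: "\<And>x' y'. (x', y') \<in> F \<Longrightarrow> y' \<in> A" unfolding A_def by auto
    show "(le1 x x' \<longleftrightarrow> le2 y y') \<and> (x = x' \<longleftrightarrow> y = y')"
    proof -
      consider "(x, y) = (a, b)" "(x', y') = (a, b)" | "(x, y) = (a, b)" "(x', y') \<in> F"
        | "(x, y) \<in> F" "(x', y') = (a, b)" | "(x, y) \<in> F" "(x', y') \<in> F" using h by auto
      then show ?thesis
      proof cases
        case 1 then show ?thesis using r1 aS r2 bT by auto
      next
        case 2
        then show ?thesis using bp[OF inA[OF 2(2)]] Uc[OF 2(2)] aF bF by auto
      next
        case 3
        then show ?thesis using bp[OF inA[OF 3(1)]] Lc[OF 3(1)] aF bF by auto
      next
        case 4 then show ?thesis using iso by blast
      qed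
    qed
  qed
  then have "piso le1 le2 S T (insert (a, b) F)" unfolding piso_def using fin2 sub2 by blast
  then show ?thesis by blast
qed

lemma back_step:
  assumes p: "piso le1 le2 S T F" and ep: "ext_prop S le1"
    and r1: "\<forall>x\<in>S. le1 x x" and r2: "\<forall>x\<in>T. le2 x x"
    and a2: "\<forall>x\<in>T. \<forall>y\<in>T. le2 x y \<longrightarrow> le2 y x \<longrightarrow> x = y"
    and t2: "\<forall>x\<in>T. \<forall>y\<in>T. \<forall>z\<in>T. le2 x y \<longrightarrow> le2 y z \<longrightarrow> le2 x z"
    and bT: "b \<in> T"
  shows "\<exists>a. piso le1 le2 S T (insert (a, b) F)"
proof -
  obtain a where "piso le2 le1 T S (insert (b, a) (converse F))"
    using forth[OF piso_conv[OF p] ep r2 r1 a2 t2 bT] by blast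
  then have "piso le1 le2 S T (converse (insert (b, a) (converse F)))" by (rule piso_conv)
  moreover have "converse (insert (b, a) (converse F)) = insert (a, b) F" by auto
  ultimately show ?thesis by metis
qed

lemma ext_prop_nonempty: "ext_prop S le \<Longrightarrow> S \<noteq> {}"
  using ext_propD[of S le "{}" "{}" "{}"] by auto

lemma back_and_forth:
  assumes cS: "countable S" and cT: "countable T" and epS: "ext_prop S le1" and epT: "ext_prop T le2"
    and r1: "\<forall>x\<in>S. le1 x x" and r2: "\<forall>x\<in>T. le2 x x"
    and a1: "\<forall>x\<in>S. \<forall>y\<in>S. le1 x y \<longrightarrow> le1 y x \<longrightarrow> x = y"
    and t1: "\<forall>x\<in>S. \<forall>y\<in>S. \<forall>z\<in>S. le1 x y \<longrightarrow> le1 y z \<longrightarrow> le1 x z"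
    and a2: "\<forall>x\<in>T. \<forall>y\<in>T. le2 x y \<longrightarrow> le2 y x \<longrightarrow> x = y"
    and t2: "\<forall>x\<in>T. \<forall>y\<in>T. \<forall>z\<in>T. le2 x y \<longrightarrow> le2 y z \<longrightarrow> le2 x z"
  shows "\<exists>h. bij_betw h S T \<and> (\<forall>x\<in>S. \<forall>y\<in>S. le1 x y \<longleftrightarrow> le2 (h x) (h y))"
proof -
  have Sne: "S \<noteq> {}" and Tne: "T \<noteq> {}" using ext_prop_nonempty epS epT by auto
  define es where "es = from_nat_into S"
  define et where "et = from_nat_into T"
  have esS: "\<And>n. es n \<in> S" unfolding es_def using from_nat_into[OF Sne] .
  have etT: "\<And>n. et n \<in> T" unfolding et_def using from_nat_into[OF Tne] .
  have esurj: "\<And>x. x \<in> S \<Longrightarrow> \<exists>n. es n = x" unfolding es_def using from_nat_into_surj[OF cS] by blast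
  have etsurj: "\<And>x. x \<in> T \<Longrightarrow> \<exists>n. et n = x" unfolding et_def using from_nat_into_surj[OF cT] by blast
  define P where "P F \<longleftrightarrow> piso le1 le2 S T F" for F
  define fwd where "fwd F a = insert (a, SOME b. P (insert (a, b) F)) F" for F a
  define bwd where "bwd F b = insert (SOME a. P (insert (a, b) F), b) F" for F b
  have Pfwd: "P (fwd F a)" if "P F" "a \<in> S" for F a
    unfolding fwd_def using forth[OF that(1)[unfolded P_def] epT r1 r2 a1 t1 that(2)]
    by (metis (mono_tags, lifting) P_def someI_ex)
  have Pbwd: "P (bwd F b)" if "P F" "b \<in> T" for F b
    unfolding bwd_def using back_step[OF that(1)[unfolded P_def] epS r1 r2 a2 t2 that(2)]
    by (metis (mono_tags, lifting) P_def someI_ex)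
  define seq where "seq = rec_nat {} (\<lambda>n F. bwd (fwd F (es n)) (et n))"
  have seq0: "seq 0 = {}" unfolding seq_def by simp
  have seqS: "seq (Suc n) = bwd (fwd (seq n) (es n)) (et n)" for n unfolding seq_def by simp
  have Pseq: "P (seq n)" for n
  proof (induction n)
    case 0 then show ?case unfolding seq0 P_def by (rule piso_empty)
  next
    case (Suc n) then show ?case unfolding seqS using Pfwd Pbwd esS etT by blast
  qed
  have inc: "seq n \<subseteq> seq (Suc n)" for n unfolding seqS fwd_def bwd_def by auto
  have mono: "m \<le> n \<Longrightarrow> seq m \<subseteq> seq n" for m n
    using lift_Suc_mono_le[of seq, OF inc] by blast
  have dom: "\<exists>y. (es n, y) \<in> seq (Suc n)" for n unfolding seqS fwd_def bwd_def by auto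
  have ran: "\<exists>x. (x, et n) \<in> seq (Suc n)" for n unfolding seqS fwd_def bwd_def by auto
  define G where "G = (\<Union>n. seq n)"
  have Gsub: "G \<subseteq> S \<times> T" unfolding G_def using Pseq unfolding P_def piso_def by blast
  have Giso: "(le1 a a' \<longleftrightarrow> le2 b b') \<and> (a = a' \<longleftrightarrow> b = b')" if ab1: "(a, b) \<in> G" and ab2: "(a', b') \<in> G" for a b a' b'
  proof -
    obtain i where "(a, b) \<in> seq i" using ab1 unfolding G_def by blast
    moreover obtain j where "(a', b') \<in> seq j" using ab2 unfolding G_def by blast
    ultimately
    have "(a, b) \<in> seq (max i j)" "(a', b') \<in> seq (max i j)" using mono[of i "max i j"] mono[of j "max i j"] by auto
    then show ?thesis using Pseq[of "max i j"] unfolding P_def piso_def by blast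
  qed
  have Gdom: "\<exists>y. (x, y) \<in> G" if "x \<in> S" for x
    using esurj[OF that] dom unfolding G_def by blast
  have Gran: "\<exists>x. (x, y) \<in> G" if "y \<in> T" for y
    using etsurj[OF that] ran unfolding G_def by blast
  define h where "h x = (SOME y. (x, y) \<in> G)" for x
  have hG: "(x, h x) \<in> G" if "x \<in> S" for x unfolding h_def using Gdom[OF that] by (rule someI_ex)
  have "bij_betw h S T"
    unfolding bij_betw_def
  proof (intro conjI)
    show "inj_on h S" unfolding inj_on_def using hG Giso by metis
    show "h ` S = T"
    proof
      show "h ` S \<subseteq> T" using hG Gsub by blast
      show "T \<subseteq> h ` S"
      proof
        fix y assume "y \<in> T"
        then obtain x where x: "(x, y) \<in> G" using Gran by blast
        then have xS: "x \<in> S" using Gsub by blast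
        have "h x = y" using Giso[OF hG[OF xS] x] by simp
        then show "y \<in> h ` S" using xS by blast
      qed
    qed
  qed
  moreover have "\<forall>x\<in>S. \<forall>y\<in>S. le1 x y \<longleftrightarrow> le2 (h x) (h y)" using hG Giso by blast
  ultimately show ?thesis by blast
qed



context
  fixes le :: "'a \<Rightarrow> 'a \<Rightarrow> bool" and c d u :: 'a
  assumes rp: "random_po le" and cd: "po_less le c d" and du: "po_less le d u"
begin

lemma prefl: "le x x" using random_po_po[OF rp] by blast
lemma panti: "le x y \<Longrightarrow> le y x \<Longrightarrow> x = y" using random_po_po[OF rp] by blast
lemma ptrans: "le x y \<Longrightarrow> le y z \<Longrightarrow> le x z" using random_po_po[OF rp] by blast

lemma D_char: "Sep le c u d x \<longleftrightarrow> po_less le c x \<and> po_less le x d"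
  using cd du unfolding Sep_def Cycl_def po_less_def po_inc_def
  by (smt (verit) prefl panti ptrans)

lemma less_char:
  assumes "po_less le c x" "po_less le x d"
  shows "Sep le c u w x \<longleftrightarrow> po_less le x w \<and> po_less le w u"
  using assms cd du unfolding Sep_def Cycl_def po_less_def po_inc_def
  by (smt (verit) prefl panti ptrans)

definition Incf :: "'a \<Rightarrow> 'a \<Rightarrow> bool" where
  "Incf a b \<longleftrightarrow> (\<exists>t w v. Sep le c u t a \<and> Sep le c u w b \<and> Sep le c u w v \<and> Sep le c u t v \<and>
      Sep le d a w v \<and> Sep le d b t v \<and> Sep le a w b t)"

lemma inc_sound:
  assumes x: "po_less le c x" "po_less le x d" and y: "po_less le c y" "po_less le y d"
    and s1: "Sep le c u t x" and s2: "Sep le c u w y" and s3: "Sep le c u w v" and s4: "Sep le c u t v"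
    and s5: "Sep le d x w v" and s6: "Sep le d y t v" and s7: "Sep le x w y t"
  shows "po_inc le x y"
proof -
  have xt: "po_less le x t" "po_less le t u" using s1 x cd du unfolding Sep_def Cycl_def po_less_def po_inc_def
    by (smt (verit) prefl panti ptrans)+
  have yw: "po_less le y w" "po_less le w u" using s2 y cd du unfolding Sep_def Cycl_def po_less_def po_inc_def
    by (smt (verit) prefl panti ptrans)+
  have vw: "po_less le c v" "po_less le v w" using s3 yw y cd du unfolding Sep_def Cycl_def po_less_def po_inc_def
    by (smt (verit) prefl panti ptrans)+
  have vt: "po_less le v t" using s4 xt x cd du unfolding Sep_def Cycl_def po_less_def po_inc_def
    by (smt (verit) prefl panti ptrans)+
  show ?thesis using s5 s6 s7 xt yw vw vt x y cd du unfolding Sep_def Cycl_def po_less_def po_inc_def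
    by (smt (verit) prefl panti ptrans)
qed

lemma ep: "ext_prop UNIV le" using random_ep[OF rp] .

lemma inc_complete:
  assumes x: "po_less le c x" "po_less le x d" and y: "po_less le c y" "po_less le y d"
    and xy: "po_inc le x y"
  shows "Incf x y"
proof -
  have lt: "le c d" "le d u" "le c u" "c \<noteq> d" "d \<noteq> u" "c \<noteq> u" "le c x" "le x d" "le c y" "le y d"
    "c \<noteq> x" "x \<noteq> d" "c \<noteq> y" "y \<noteq> d" "\<not> le x y" "\<not> le y x" "le x u" "le y u"
    using cd du x y xy unfolding po_less_def po_inc_def using ptrans panti by blast+
  have nl: "\<not> le d c" "\<not> le u d" "\<not> le u c" "\<not> le d x" "\<not> le u x" "\<not> le x c" "\<not> le d y" "\<not> le u y" "\<not> le y c"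
    "x \<noteq> u" "y \<noteq> u" "x \<noteq> y"
    using lt panti ptrans prefl by metis+
  obtain t where t: "t \<notin> {c, d, u, x, y}"
    and tr: "\<And>a. a \<in> {c, d, u, x, y} \<Longrightarrow> (le a t \<longleftrightarrow> a \<in> {c, x}) \<and> (le t a \<longleftrightarrow> a \<in> {u})"
  proof -
    have "\<exists>p\<in>UNIV. p \<notin> {c, d, u, x, y} \<and> (\<forall>a\<in>{c, d, u, x, y}. (le a p \<longleftrightarrow> a \<in> {c, x}) \<and> (le p a \<longleftrightarrow> a \<in> {u}))"
      by (rule ext_propD[OF ep]) (use lt nl in auto)
    then show ?thesis using that by blast
  qed
  obtain w where w: "w \<notin> {c, d, u, x, y, t}"
    and wr: "\<And>a. a \<in> {c, d, u, x, y, t} \<Longrightarrow> (le a w \<longleftrightarrow> a \<in> {c, y}) \<and> (le w a \<longleftrightarrow> a \<in> {u})"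
  proof -
    have "\<exists>p\<in>UNIV. p \<notin> {c, d, u, x, y, t} \<and> (\<forall>a\<in>{c, d, u, x, y, t}. (le a p \<longleftrightarrow> a \<in> {c, y}) \<and> (le p a \<longleftrightarrow> a \<in> {u}))"
      by (rule ext_propD[OF ep]) (use lt nl t tr in auto)
    then show ?thesis using that by blast
  qed
  obtain v where v: "v \<notin> {c, d, u, x, y, t, w}"
    and vr: "\<And>a. a \<in> {c, d, u, x, y, t, w} \<Longrightarrow> (le a v \<longleftrightarrow> a \<in> {c}) \<and> (le v a \<longleftrightarrow> a \<in> {t, w, u})"
  proof -
    have "\<exists>p\<in>UNIV. p \<notin> {c, d, u, x, y, t, w} \<and> (\<forall>a\<in>{c, d, u, x, y, t, w}. (le a p \<longleftrightarrow> a \<in> {c}) \<and> (le p a \<longleftrightarrow> a \<in> {t, w, u}))"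
      by (rule ext_propD[OF ep]) (use lt nl t tr w wr in auto)
    then show ?thesis using that by blast
  qed
  have facts: "le c t" "le x t" "le t u" "\<not> le d t" "\<not> le y t" "\<not> le u t" "\<not> le t c" "\<not> le t d" "\<not> le t x" "\<not> le t y"
    "le c w" "le y w" "le w u" "\<not> le d w" "\<not> le x w" "\<not> le u w" "\<not> le t w" "\<not> le w c" "\<not> le w d" "\<not> le w x" "\<not> le w y" "\<not> le w t"
    "le c v" "le v t" "le v w" "le v u" "\<not> le d v" "\<not> le u v" "\<not> le x v" "\<not> le y v" "\<not> le t v" "\<not> le w v" "\<not> le v c" "\<not> le v d" "\<not> le v x" "\<not> le v y"
    using tr[of c] tr[of d] tr[of u] tr[of x] tr[of y] wr[of c] wr[of d] wr[of u] wr[of x] wr[of y] wr[of t]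
      vr[of c] vr[of d] vr[of u] vr[of x] vr[of y] vr[of t] vr[of w] nl lt by auto
  have ne: "t \<noteq> c" "t \<noteq> d" "t \<noteq> u" "t \<noteq> x" "t \<noteq> y" "w \<noteq> c" "w \<noteq> d" "w \<noteq> u" "w \<noteq> x" "w \<noteq> y" "w \<noteq> t"
    "v \<noteq> c" "v \<noteq> d" "v \<noteq> u" "v \<noteq> x" "v \<noteq> y" "v \<noteq> t" "v \<noteq> w" using t w v by auto
  show ?thesis unfolding Incf_def
  proof (intro exI conjI)
    show "Sep le c u t x" using facts ne lt nl unfolding Sep_def Cycl_def po_less_def po_inc_def by (smt (verit) prefl)
    show "Sep le c u w y" using facts ne lt nl unfolding Sep_def Cycl_def po_less_def po_inc_def by (smt (verit) prefl)
    show "Sep le c u w v" using facts ne lt nl unfolding Sep_def Cycl_def po_less_def po_inc_def by (smt (verit) prefl)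
    show "Sep le c u t v" using facts ne lt nl unfolding Sep_def Cycl_def po_less_def po_inc_def by (smt (verit) prefl)
    show "Sep le d x w v" using facts ne lt nl unfolding Sep_def Cycl_def po_less_def po_inc_def by (smt (verit) prefl)
    show "Sep le d y t v" using facts ne lt nl unfolding Sep_def Cycl_def po_less_def po_inc_def by (smt (verit) prefl)
    show "Sep le x w y t" using facts ne lt nl unfolding Sep_def Cycl_def po_less_def po_inc_def by (smt (verit) prefl)
  qed
qed


lemma inc_iff:
  assumes "po_less le c x" "po_less le x d" "po_less le c y" "po_less le y d"
  shows "Incf x y \<longleftrightarrow> po_inc le x y"
  using inc_complete[OF assms] inc_sound[OF assms] unfolding Incf_def by blast

definition DD :: "'a set" where "DD = {x. po_less le c x \<and> po_less le x d}"

lemma epD: "ext_prop DD le"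
  unfolding ext_prop_def
proof (intro allI impI, elim conjE)
  fix A L U assume fA: "finite A" and AD: "A \<subseteq> DD" and LA: "L \<subseteq> A" and UA: "U \<subseteq> A"
    and Ld: "\<forall>a\<in>A. \<forall>b\<in>L. le a b \<longrightarrow> a \<in> L" and Uu: "\<forall>a\<in>U. \<forall>b\<in>A. le a b \<longrightarrow> b \<in> U"
    and LU: "\<forall>a\<in>L. \<forall>b\<in>U. le a b" and LUd: "L \<inter> U = {}"
  have inD: "\<And>a. a \<in> A \<Longrightarrow> le c a \<and> c \<noteq> a \<and> le a d \<and> a \<noteq> d"
    using AD unfolding DD_def po_less_def by auto
  have cdf: "le c d" "c \<noteq> d" "\<not> le d c" using cd panti unfolding po_less_def by auto
  have nA: "\<And>a. a \<in> A \<Longrightarrow> \<not> le a c \<and> \<not> le d a" using inD panti by metis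
  have "\<exists>p\<in>UNIV. p \<notin> insert c (insert d A) \<and> (\<forall>a\<in>insert c (insert d A). (le a p \<longleftrightarrow> a \<in> insert c L) \<and> (le p a \<longleftrightarrow> a \<in> insert d U))"
  proof (rule ext_propD[OF ep])
    show "finite (insert c (insert d A))" using fA by simp
    show "insert c L \<subseteq> insert c (insert d A)" using LA by auto
    show "insert d U \<subseteq> insert c (insert d A)" using UA by auto
    show "a \<in> insert c L" if "a \<in> insert c (insert d A)" "b \<in> insert c L" "le a b" for a b
      using that Ld LA nA cdf inD by blast
    show "b \<in> insert d U" if "a \<in> insert d U" "b \<in> insert c (insert d A)" "le a b" for a b
      using that Uu UA nA cdf inD by blast
    show "le a b" if "a \<in> insert c L" "b \<in> insert d U" for a b
      using that LU LA UA inD cdf by blast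
    show "insert c L \<inter> insert d U = {}"
      using LUd LA UA inD cdf by blast
  qed simp_all
  then obtain p where p: "p \<notin> insert c (insert d A)"
    and pr: "\<And>a. a \<in> insert c (insert d A) \<Longrightarrow> (le a p \<longleftrightarrow> a \<in> insert c L) \<and> (le p a \<longleftrightarrow> a \<in> insert d U)" by blast
  have "p \<in> DD" using pr[of c] pr[of d] p unfolding DD_def po_less_def by auto
  moreover have "\<forall>a\<in>A. (le a p \<longleftrightarrow> a \<in> L) \<and> (le p a \<longleftrightarrow> a \<in> U)"
    using pr inD by auto
  ultimately show "\<exists>p\<in>DD. p \<notin> A \<and> (\<forall>a\<in>A. (le a p \<longleftrightarrow> a \<in> L) \<and> (le p a \<longleftrightarrow> a \<in> U))"
    using p by blast
qed

lemma isoD: "\<exists>h. bij_betw h DD UNIV \<and> (\<forall>x\<in>DD. \<forall>y\<in>DD. le x y \<longleftrightarrow> le (h x) (h y))"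
proof (rule back_and_forth)
  have "countable (UNIV :: 'a set)" using rp unfolding random_po_def by blast
  then show "countable DD" by (rule countable_subset[rotated]) simp
  show "countable (UNIV :: 'a set)" using rp unfolding random_po_def by blast
  show "ext_prop DD le" by (rule epD)
  show "ext_prop UNIV le" by (rule ep)
qed (use prefl panti ptrans in blast)+

definition Lowf :: "'a \<Rightarrow> 'a \<Rightarrow> 'a \<Rightarrow> bool" where
  "Lowf x y z \<longleftrightarrow> Incf y z \<and> (\<exists>t. Sep le x y z t) \<and> (\<exists>w. Sep le c u d w \<and> Sep le c u w x \<and> Incf w y \<and> Incf w z)"

lemma low_iff:
  assumes x: "x \<in> DD" and y: "y \<in> DD" and z: "z \<in> DD"
  shows "Lowf x y z \<longleftrightarrow> Low le x y z"
proof
  assume h: "Lowf x y z"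
  then obtain t w where yz: "Incf y z" and s: "Sep le x y z t" and w1: "Sep le c u d w" and w2: "Sep le c u w x"
    and wy: "Incf w y" and wz: "Incf w z" unfolding Lowf_def by blast
  have wD: "po_less le c w" "po_less le w d" using w1 D_char by auto
  have xD: "po_less le c x" "po_less le x d" and yD: "po_less le c y" "po_less le y d"
    and zD: "po_less le c z" "po_less le z d" using x y z unfolding DD_def by auto
  have i1: "po_inc le y z" using yz inc_iff yD zD by blast
  have i2: "po_inc le w y" using wy inc_iff yD wD by blast
  have i3: "po_inc le w z" using wz inc_iff zD wD by blast
  have xw: "po_less le x w" using w2 less_char[OF xD] by blast
  show "Low le x y z" using s i1 i2 i3 xw unfolding Low_def Sep_def Cycl_def po_less_def po_inc_def
    by (smt (verit) prefl panti ptrans)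
next
  assume h: "Low le x y z"
  have xD: "po_less le c x" "po_less le x d" and yD: "po_less le c y" "po_less le y d"
    and zD: "po_less le c z" "po_less le z d" using x y z unfolding DD_def by auto
  have i1: "po_inc le y z" using h unfolding Low_def po_inc_def po_less_def using ptrans by blast
  have "\<exists>t. Sep le x y z t"
  proof (cases "po_less le x y \<and> po_inc le z x \<and> po_inc le z y")
    case True
    have nl: "\<not> le z x" "\<not> le x z" "\<not> le z y" "\<not> le y z" "le x y" "\<not> le y x" "x \<noteq> y" "x \<noteq> z" "y \<noteq> z"
      using True prefl panti unfolding po_less_def po_inc_def by metis+
    have "\<exists>p\<in>UNIV. p \<notin> {x, y, z} \<and> (\<forall>a\<in>{x, y, z}. (le a p \<longleftrightarrow> a \<in> {z}) \<and> (le p a \<longleftrightarrow> a \<in> {}))"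
      by (rule ext_propD[OF ep]) (use nl in auto)
    then obtain t where t: "t \<notin> {x, y, z}" "\<And>a. a \<in> {x, y, z} \<Longrightarrow> (le a t \<longleftrightarrow> a \<in> {z}) \<and> (le t a \<longleftrightarrow> a \<in> {})"
      by blast
    have "le z t" "\<not> le x t" "\<not> le y t" "\<not> le t x" "\<not> le t y" "\<not> le t z" "t \<noteq> x" "t \<noteq> y" "t \<noteq> z"
      using t(1) t(2)[of x] t(2)[of y] t(2)[of z] nl by auto
    then have "Sep le x y z t" using nl unfolding Sep_def Cycl_def po_less_def po_inc_def
      by (smt (verit) prefl)
    then show ?thesis by blast
  next
    case False
    then have F: "po_less le x z \<and> po_inc le y x \<and> po_inc le y z" using h unfolding Low_def by blast
    have nl: "\<not> le y x" "\<not> le x y" "\<not> le z y" "\<not> le y z" "le x z" "\<not> le z x" "x \<noteq> y" "x \<noteq> z" "y \<noteq> z"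
      using F prefl panti unfolding po_less_def po_inc_def by metis+
    have "\<exists>p\<in>UNIV. p \<notin> {x, y, z} \<and> (\<forall>a\<in>{x, y, z}. (le a p \<longleftrightarrow> a \<in> {x}) \<and> (le p a \<longleftrightarrow> a \<in> {z}))"
      by (rule ext_propD[OF ep]) (use nl in auto)
    then obtain t where t: "t \<notin> {x, y, z}" "\<And>a. a \<in> {x, y, z} \<Longrightarrow> (le a t \<longleftrightarrow> a \<in> {x}) \<and> (le t a \<longleftrightarrow> a \<in> {z})"
      by blast
    have "le x t" "\<not> le y t" "\<not> le z t" "\<not> le t x" "\<not> le t y" "le t z" "t \<noteq> x" "t \<noteq> y" "t \<noteq> z"
      using t(1) t(2)[of x] t(2)[of y] t(2)[of z] nl by auto
    then have "Sep le x y z t" using nl unfolding Sep_def Cycl_def po_less_def po_inc_def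
      by (smt (verit) prefl)
    then show ?thesis by blast
  qed
  moreover have "\<exists>w. Sep le c u d w \<and> Sep le c u w x \<and> Incf w y \<and> Incf w z"
  proof -
    have nl: "\<not> le y x" "\<not> le z x" "x \<noteq> y" "x \<noteq> z"
      using h prefl panti unfolding Low_def po_less_def po_inc_def by metis+
    have "\<exists>p\<in>DD. p \<notin> {x, y, z} \<and> (\<forall>a\<in>{x, y, z}. (le a p \<longleftrightarrow> a \<in> {x}) \<and> (le p a \<longleftrightarrow> a \<in> {}))"
      by (rule ext_propD[OF epD]) (use nl x y z in auto)
    then obtain w where wD: "w \<in> DD" and t: "w \<notin> {x, y, z}" "\<And>a. a \<in> {x, y, z} \<Longrightarrow> (le a w \<longleftrightarrow> a \<in> {x}) \<and> (le w a \<longleftrightarrow> a \<in> {})"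
      by blast
    have wD': "po_less le c w" "po_less le w d" using wD unfolding DD_def by auto
    have "po_inc le w y" "po_inc le w z" "po_less le x w"
      using t(1) t(2)[of x] t(2)[of y] t(2)[of z] nl unfolding po_inc_def po_less_def by auto
    then have wyz: "po_inc le w y" "po_inc le w z" "po_less le x w" .
    have wu: "po_less le w u" using wD' du panti ptrans unfolding po_less_def by metis
    have "Sep le c u d w" using D_char wD' by blast
    moreover have "Sep le c u w x" using less_char[OF xD] wyz(3) wu by blast
    moreover have "Incf w y" using inc_iff[OF wD' yD] wyz(1) by blast
    moreover have "Incf w z" using inc_iff[OF wD' zD] wyz(2) by blast
    ultimately have "Sep le c u d w \<and> Sep le c u w x \<and> Incf w y \<and> Incf w z" by blast
    then show ?thesis by blast
  qed
  ultimately show "Lowf x y z" unfolding Lowf_def using inc_iff[OF yD zD] i1 by blast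
qed

end


lemma ex_len_Suc: "(\<exists>ys. length ys = Suc n \<and> P ys) \<longleftrightarrow> (\<exists>y ys. length ys = n \<and> P (y # ys))"
  by (metis length_Suc_conv)

lemma ex_len_0: "(\<exists>ys. length ys = 0 \<and> P ys) \<longleftrightarrow> P []"
  by auto

definition incatoms :: "nat \<Rightarrow> nat \<Rightarrow> nat \<Rightarrow> nat \<Rightarrow> nat \<Rightarrow> atom list" where
  "incatoms a b t w v = [Rel 0 [3, 5, t, a], Rel 0 [3, 5, w, b], Rel 0 [3, 5, w, v], Rel 0 [3, 5, t, v],
     Rel 0 [4, a, w, v], Rel 0 [4, b, t, v], Rel 0 [a, w, b, t]]"

definition lowatoms :: "atom list" where
  "lowatoms = [Rel 1 [3], Rel 2 [4], Rel 3 [5], Rel 0 [3, 5, 4, 0], Rel 0 [3, 5, 4, 1], Rel 0 [3, 5, 4, 2],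
     Rel 0 [0, 1, 2, 6], Rel 0 [3, 5, 4, 7], Rel 0 [3, 5, 7, 0]]
     @ incatoms 1 2 8 9 10 @ incatoms 7 1 11 12 13 @ incatoms 7 2 14 15 16"

lemma all_less_3: "(\<forall>i<3. P (i::nat)) \<longleftrightarrow> P 0 \<and> P 1 \<and> P 2"
  by (auto simp: less_Suc_eq numeral_eq_Suc)

lemma chunk1: "chunk (Suc 0) i zs = take 1 (drop i zs)" unfolding chunk_def by simp

theorem lemma64:
  fixes le :: "'a \<Rightarrow> 'a \<Rightarrow> bool" and c d u :: 'a
  assumes "random_po le"
    and "po_less le c d" and "po_less le d u"
  shows "pp_interprets
           [(3, \<lambda>xs. Low le (xs ! 0) (xs ! 1) (xs ! 2))]
           [\<lambda>xs. length xs = 4 \<and> Sep le (xs ! 0) (xs ! 1) (xs ! 2) (xs ! 3),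
            \<lambda>xs. xs = [c], \<lambda>xs. xs = [d], \<lambda>xs. xs = [u]]"
proof -
  note A = assms
  define D where "D = DD le c d"
  have Dch: "\<And>x. x \<in> D \<longleftrightarrow> Sep le c u d x" unfolding D_def DD_def[OF A] using D_char[OF A] by blast
  obtain h where hb: "bij_betw h D UNIV" and hle: "\<forall>x\<in>D. \<forall>y\<in>D. le x y \<longleftrightarrow> le (h x) (h y)"
    using isoD[OF A] unfolding D_def by blast
  have hinj: "\<And>x y. x \<in> D \<Longrightarrow> y \<in> D \<Longrightarrow> h x = h y \<longleftrightarrow> x = y" using hb unfolding bij_betw_def inj_on_def by blast
  have hsurj: "\<And>b. \<exists>x\<in>D. h x = b" using hb unfolding bij_betw_def by (metis UNIV_I imageE)
  have hlow: "\<And>x y z. x \<in> D \<Longrightarrow> y \<in> D \<Longrightarrow> z \<in> D \<Longrightarrow> Low le (h x) (h y) (h z) \<longleftrightarrow> Low le x y z"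
  proof -
    fix x y z assume xyz: "x \<in> D" "y \<in> D" "z \<in> D"
    have e: "\<And>a b. a \<in> D \<Longrightarrow> b \<in> D \<Longrightarrow> le a b = le (h a) (h b)" using hle by blast
    show "Low le (h x) (h y) (h z) \<longleftrightarrow> Low le x y z"
      unfolding Low_def po_less_def po_inc_def using xyz by (simp add: e hinj)
  qed
  define I where "I xs = (if length xs = 1 \<and> xs ! 0 \<in> D then Some (h (xs ! 0)) else None)" for xs :: "'a list"
  show ?thesis
    unfolding pp_interprets_def
  proof (intro exI[of _ 1] exI[of _ I] conjI)
    show "(1::nat) \<le> 1" by simp
    show "\<forall>b. \<exists>xs. length xs = 1 \<and> I xs = Some b"
    proof
      fix b obtain x where "x \<in> D" "h x = b" using hsurj by blast
      then show "\<exists>xs. length xs = 1 \<and> I xs = Some b" by (intro exI[of _ "[x]"]) (simp add: I_def)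
    qed
    show "pp_definable [\<lambda>xs. length xs = 4 \<and> Sep le (xs ! 0) (xs ! 1) (xs ! 2) (xs ! 3),
            \<lambda>xs. xs = [c], \<lambda>xs. xs = [d], \<lambda>xs. xs = [u]] 1 (\<lambda>xs. I xs \<noteq> None)"
      unfolding pp_definable_def
    proof (intro exI[of _ 3] exI[of _ "[Rel 1 [1], Rel 2 [2], Rel 3 [3], Rel 0 [1, 3, 2, 0]]"] conjI allI impI)
      show "\<forall>a\<in>set [Rel 1 [1], Rel 2 [2], Rel 3 [3], Rel 0 [1, 3, 2, 0]]. \<forall>i\<in>atom_vars a. i < 1 + 3" by simp
      fix xs :: "'a list" assume "length xs = 1"
      then obtain x where xs: "xs = [x]" by (metis One_nat_def length_0_conv length_Suc_conv)
      show "(I xs \<noteq> None) = (\<exists>ys. length ys = 3 \<and> (\<forall>a\<in>set [Rel 1 [1], Rel 2 [2], Rel 3 [3], Rel 0 [1, 3, 2, 0]].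
               holds [\<lambda>xs. length xs = 4 \<and> Sep le (xs ! 0) (xs ! 1) (xs ! 2) (xs ! 3),
            \<lambda>xs. xs = [c], \<lambda>xs. xs = [d], \<lambda>xs. xs = [u]] (\<lambda>i. (xs @ ys) ! i) a))"
        unfolding xs by (simp only: eval_nat_numeral BitM.simps numeral_One One_nat_def ex_len_Suc ex_len_0) (simp add: I_def Dch)
    qed
    show "pp_definable [\<lambda>xs. length xs = 4 \<and> Sep le (xs ! 0) (xs ! 1) (xs ! 2) (xs ! 3),
            \<lambda>xs. xs = [c], \<lambda>xs. xs = [d], \<lambda>xs. xs = [u]] (2 * 1)
            (\<lambda>zs. \<exists>b. I (chunk 1 0 zs) = Some b \<and> I (chunk 1 1 zs) = Some b)"
      unfolding pp_definable_def
    proof (intro exI[of _ 3] exI[of _ "[Rel 1 [2], Rel 2 [3], Rel 3 [4], Rel 0 [2, 4, 3, 0], Eq 0 1]"] conjI allI impI)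
      show "\<forall>a\<in>set [Rel 1 [2], Rel 2 [3], Rel 3 [4], Rel 0 [2, 4, 3, 0], Eq 0 1]. \<forall>i\<in>atom_vars a. i < 2 * 1 + 3" by simp
      fix xs :: "'a list" assume "length xs = 2 * 1"
      then obtain x y where xs: "xs = [x, y]" by (metis (no_types, lifting) One_nat_def Suc_1 length_0_conv length_Suc_conv mult_1_right)
      show "(\<exists>b. I (chunk 1 0 xs) = Some b \<and> I (chunk 1 1 xs) = Some b) = (\<exists>ys. length ys = 3 \<and> (\<forall>a\<in>set [Rel 1 [2], Rel 2 [3], Rel 3 [4], Rel 0 [2, 4, 3, 0], Eq 0 1].
               holds [\<lambda>xs. length xs = 4 \<and> Sep le (xs ! 0) (xs ! 1) (xs ! 2) (xs ! 3),
            \<lambda>xs. xs = [c], \<lambda>xs. xs = [d], \<lambda>xs. xs = [u]] (\<lambda>i. (xs @ ys) ! i) a))"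
        unfolding xs by (simp only: eval_nat_numeral BitM.simps numeral_One One_nat_def ex_len_Suc ex_len_0) (use hinj in \<open>auto simp add: I_def Dch chunk_def\<close>)
    qed
    show "\<forall>(k, R)\<in>set [(3, \<lambda>xs. Low le (xs ! 0) (xs ! 1) (xs ! 2))]. pp_definable [\<lambda>xs. length xs = 4 \<and> Sep le (xs ! 0) (xs ! 1) (xs ! 2) (xs ! 3),
            \<lambda>xs. xs = [c], \<lambda>xs. xs = [d], \<lambda>xs. xs = [u]] (k * 1)
           (\<lambda>zs. \<exists>bs. length bs = k \<and> (\<forall>i<k. I (chunk 1 i zs) = Some (bs ! i)) \<and> R bs)"
    proof (simp only: list.set prod.case ball_simps simp_thms, unfold pp_definable_def,
        intro exI[of _ 14] exI[of _ lowatoms] conjI allI impI)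
      show "\<forall>a\<in>set lowatoms. \<forall>i\<in>atom_vars a. i < 3 * 1 + 14"
        unfolding lowatoms_def incatoms_def by simp
      fix xs :: "'a list" assume "length xs = 3 * 1"
      then obtain x y z where xs: "xs = [x, y, z]"
        by (simp add: numeral_eq_Suc length_Suc_conv) blast
      have L1: "(\<exists>bs. length bs = 3 \<and> (\<forall>i<3. I (chunk 1 i xs) = Some (bs ! i)) \<and> Low le (bs ! 0) (bs ! 1) (bs ! 2))
          \<longleftrightarrow> x \<in> D \<and> y \<in> D \<and> z \<in> D \<and> Low le x y z"
      proof
        assume "\<exists>bs. length bs = 3 \<and> (\<forall>i<3. I (chunk 1 i xs) = Some (bs ! i)) \<and> Low le (bs ! 0) (bs ! 1) (bs ! 2)"
        then obtain bs where bs: "I [x] = Some (bs ! 0)" "I [y] = Some (bs ! 1)" "I [z] = Some (bs ! 2)"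
          "Low le (bs ! 0) (bs ! 1) (bs ! 2)"
          unfolding all_less_3 xs by (auto simp: chunk_def)
        have "x \<in> D" "y \<in> D" "z \<in> D" "bs ! 0 = h x" "bs ! 1 = h y" "bs ! 2 = h z"
          using bs(1-3) unfolding I_def by (auto split: if_splits)
        then show "x \<in> D \<and> y \<in> D \<and> z \<in> D \<and> Low le x y z" using bs(4) hlow by auto
      next
        assume h: "x \<in> D \<and> y \<in> D \<and> z \<in> D \<and> Low le x y z"
        show "\<exists>bs. length bs = 3 \<and> (\<forall>i<3. I (chunk 1 i xs) = Some (bs ! i)) \<and> Low le (bs ! 0) (bs ! 1) (bs ! 2)"
          by (rule exI[of _ "[h x, h y, h z]"]) (use h hlow in \<open>auto simp: all_less_3 xs chunk_def I_def\<close>)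
      qed
      have L2: "x \<in> D \<and> y \<in> D \<and> z \<in> D \<and> Low le x y z \<longleftrightarrow> x \<in> D \<and> y \<in> D \<and> z \<in> D \<and> Lowf le c d u x y z"
        using low_iff[OF A] unfolding D_def by blast
      have L3: "(\<exists>ys. length ys = 14 \<and> (\<forall>a\<in>set lowatoms. holds [\<lambda>xs. length xs = 4 \<and> Sep le (xs ! 0) (xs ! 1) (xs ! 2) (xs ! 3),
            \<lambda>xs. xs = [c], \<lambda>xs. xs = [d], \<lambda>xs. xs = [u]] (\<lambda>i. (xs @ ys) ! i) a))
        \<longleftrightarrow> x \<in> D \<and> y \<in> D \<and> z \<in> D \<and> Lowf le c d u x y z"
        unfolding xs lowatoms_def incatoms_def Lowf_def[OF A] Incf_def[OF A] Dch
        apply (simp only: eval_nat_numeral BitM.simps numeral_One One_nat_def ex_len_Suc ex_len_0)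
        apply simp
        by blast
      show "(\<exists>bs. length bs = 3 \<and> (\<forall>i<3. I (chunk 1 i xs) = Some (bs ! i)) \<and> Low le (bs ! 0) (bs ! 1) (bs ! 2)) =
         (\<exists>ys. length ys = 14 \<and> (\<forall>a\<in>set lowatoms. holds [\<lambda>xs. length xs = 4 \<and> Sep le (xs ! 0) (xs ! 1) (xs ! 2) (xs ! 3),
            \<lambda>xs. xs = [c], \<lambda>xs. xs = [d], \<lambda>xs. xs = [u]] (\<lambda>i. (xs @ ys) ! i) a))"
        using L1 L2 L3 by simp
    qed
  qed
qed

end
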